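(* Let $B\colon\mathbf{Set}\to\mathbf{Set}$ be a functor, $\Lambda$ a set and $(\tau_\lambda\colon B\mathbb{R}\to\mathbb{R})_{\lambda\in\Lambda}$ functions such that, for every set $Y$: (1) if $k\colon Y\to\mathbb{R}$ is bounded then $\tau_\lambda\circ Bk$ is bounded for each $\lambda$; (2) if $k_i\colon Y\to\mathbb{R}$ converges uniformly to $h$ then $\tau_\lambda\circ Bk_i$ converges uniformly to $\tau_\lambda\circ Bh$ for each $\lambda$. Let $X$ be a set and $S\subseteq\mathbf{Set}(X,\mathbb{R})$ such that every function in $S$ is bounded, the constant function $1$ is in $S$, and $S$ is closed under pointwise $\min$, $k\mapsto r+k$ and $k\mapsto rk$ for every $r\in\mathbb{R}$. Then $S$ is approximating: for every $h\colon X\to\mathbb{R}$ uniformly continuous w.r.t. $\mathscr{U}(S)$ and every $\lambda\in\Lambda$, the function $\tau_\lambda\circ Bh\colon BX\to\mathbb{R}$ is uniformly continuous w.r.t. the uniformity $\mathscr{U}(\{\tau_{\lambda'}\circ Bk\mid k\in S,\lambda'\in\Lambda\})$ on $BX$.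
   Context: For a set $Y$ and a family $F$ of functions $Y\to\mathbb{R}$, $\mathscr{U}(F)$ denotes the coarsest uniformity on $Y$ making every $f\in F$ uniformly continuous into $\mathbb{R}$ with the uniformity induced by the Euclidean metric. *)

theory Defs
  imports "HOL-Analysis.Analysis"
begin

text \<open>The coarsest uniformity on the carrier type making every f in F uniformly
  continuous into the reals (Euclidean uniformity), as a filter of entourages.
  For F empty this is the indiscrete uniformity (top filter).\<close>
definition unif_gen :: "('a \<Rightarrow> real) set \<Rightarrow> ('a \<times> 'a) filter" where
  "unif_gen F = (INF f\<in>F. INF e\<in>{0<..}. principal {p. \<bar>f (fst p) - f (snd p)\<bar> < e})"

definition ucont_wrt :: "('a \<times> 'a) filter \<Rightarrow> ('a \<Rightarrow> real) \<Rightarrow> bool" where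
  "ucont_wrt U h \<longleftrightarrow> (\<forall>e>0. eventually (\<lambda>p. \<bar>h (fst p) - h (snd p)\<bar> < e) U)"

text \<open>A functor from the full subcategory of Set on the two objects X (type 'x)
  and R (the reals) into Set, with BX = type 'bx and BR = type 'br.\<close>
definition set_functor2 ::
  "(('x \<Rightarrow> 'x) \<Rightarrow> 'bx \<Rightarrow> 'bx) \<Rightarrow> (('x \<Rightarrow> real) \<Rightarrow> 'bx \<Rightarrow> 'br) \<Rightarrow>
   ((real \<Rightarrow> 'x) \<Rightarrow> 'br \<Rightarrow> 'bx) \<Rightarrow> ((real \<Rightarrow> real) \<Rightarrow> 'br \<Rightarrow> 'br) \<Rightarrow> bool" where
  "set_functor2 BXX BXR BRX BRR \<longleftrightarrow>
     BXX id = id \<and> BRR id = id \<and>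
     (\<forall>f g. BXX (g \<circ> f) = BXX g \<circ> BXX f) \<and>
     (\<forall>f g. BXR (g \<circ> f) = BXR g \<circ> BXX f) \<and>
     (\<forall>f g. BXX (g \<circ> f) = BRX g \<circ> BXR f) \<and>
     (\<forall>f g. BXR (g \<circ> f) = BRR g \<circ> BXR f) \<and>
     (\<forall>f g. BRX (g \<circ> f) = BXX g \<circ> BRX f) \<and>
     (\<forall>f g. BRR (g \<circ> f) = BXR g \<circ> BRX f) \<and>
     (\<forall>f g. BRX (g \<circ> f) = BRX g \<circ> BRR f) \<and>
     (\<forall>f g. BRR (g \<circ> f) = BRR g \<circ> BRR f)"

end

theory Submission
  imports Defs
begin

lemma ev_gen_base:
  assumes "e > 0"
  shows "eventually P (INF e\<in>{0<..}. principal {p. \<bar>(f::'a\<Rightarrow>real) (fst p) - f (snd p)\<bar> < e})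
     \<longleftrightarrow> (\<exists>e>0. \<forall>p. \<bar>f (fst p) - f (snd p)\<bar> < e \<longrightarrow> P p)"
proof -
  have "eventually P (INF e\<in>{0<..}. principal {p. \<bar>f (fst p) - f (snd p)\<bar> < e})
     \<longleftrightarrow> (\<exists>b\<in>{0<..}. eventually P (principal {p. \<bar>f (fst p) - f (snd p)\<bar> < b}))"
  proof (rule eventually_INF_base)
    show "{0<..} \<noteq> ({}::real set)" by auto
    fix a b :: real assume "a \<in> {0<..}" "b \<in> {0<..}"
    then show "\<exists>x\<in>{0<..}. principal {p. \<bar>f (fst p) - f (snd p)\<bar> < x}
       \<le> inf (principal {p. \<bar>f (fst p) - f (snd p)\<bar> < a}) (principal {p. \<bar>f (fst p) - f (snd p)\<bar> < b})"
      by (intro bexI[of _ "min a b"]) auto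
  qed
  then show ?thesis by (auto simp: eventually_principal)
qed

lemma L1:
  assumes "ucont_wrt (unif_gen S) h" "\<epsilon> > 0"
  shows "\<exists>F\<subseteq>S. finite F \<and> (\<exists>\<delta>>0. \<forall>x y. (\<forall>k\<in>F. \<bar>k x - k y\<bar> < \<delta>) \<longrightarrow> \<bar>h x - h y\<bar> < \<epsilon>)"
proof -
  let ?P = "\<lambda>p. \<bar>h (fst p) - h (snd p)\<bar> < \<epsilon>"
  have "eventually ?P (unif_gen S)" using assms unfolding ucont_wrt_def by blast
  then have "eventually ?P (INF f\<in>S. INF e\<in>{0<..}. principal {p. \<bar>f (fst p) - f (snd p)\<bar> < e})"
    unfolding unif_gen_def .
  then have "\<exists>X\<subseteq>S. finite X \<and> eventually ?P (INF f\<in>X. INF e\<in>{0<..}. principal {p. \<bar>f (fst p) - f (snd p)\<bar> < e})"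
    by (rule eventually_INF[THEN iffD1])
  then obtain F where F: "F \<subseteq> S" "finite F"
    and ev: "eventually ?P (INF f\<in>F. INF e\<in>{0<..}. principal {p. \<bar>f (fst p) - f (snd p)\<bar> < e})"
    by (elim exE conjE)
  have "\<exists>Q. (\<forall>f\<in>F. eventually (Q f) (INF e\<in>{0<..}. principal {p. \<bar>f (fst p) - f (snd p)\<bar> < e}))
      \<and> (\<forall>y. (\<forall>f\<in>F. Q f y) \<longrightarrow> ?P y)"
    using ev unfolding eventually_INF_finite[OF F(2)] .
  then obtain Q where Q: "\<forall>f\<in>F. eventually (Q f) (INF e\<in>{0<..}. principal {p. \<bar>f (fst p) - f (snd p)\<bar> < e})"
    and QP: "\<forall>y. (\<forall>f\<in>F. Q f y) \<longrightarrow> ?P y"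
    by (elim exE conjE)
  have "\<forall>f\<in>F. \<exists>e>0. \<forall>p. \<bar>f (fst p) - f (snd p)\<bar> < e \<longrightarrow> Q f p"
  proof
    fix f assume "f \<in> F"
    with Q have "eventually (Q f) (INF e\<in>{0<..}. principal {p. \<bar>f (fst p) - f (snd p)\<bar> < e})" by blast
    then show "\<exists>e>0. \<forall>p. \<bar>f (fst p) - f (snd p)\<bar> < e \<longrightarrow> Q f p"
      unfolding ev_gen_base[OF zero_less_one] .
  qed
  from bchoice[OF this] obtain e where e: "\<forall>f\<in>F. e f > 0 \<and> (\<forall>p. \<bar>f (fst p) - f (snd p)\<bar> < e f \<longrightarrow> Q f p)"
    by blast
  define \<delta> where "\<delta> = Min (insert 1 (e ` F))"
  have dpos: "\<delta> > 0" unfolding \<delta>_def using F(2) e by (subst Min_gr_iff) auto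
  have dle: "\<And>f. f \<in> F \<Longrightarrow> \<delta> \<le> e f" unfolding \<delta>_def using F(2) by auto
  have "\<forall>x y. (\<forall>k\<in>F. \<bar>k x - k y\<bar> < \<delta>) \<longrightarrow> \<bar>h x - h y\<bar> < \<epsilon>"
  proof (intro allI impI)
    fix x y assume "\<forall>k\<in>F. \<bar>k x - k y\<bar> < \<delta>"
    then have "\<forall>f\<in>F. \<bar>f (fst (x,y)) - f (snd (x,y))\<bar> < e f" using dle by fastforce
    then have "\<forall>f\<in>F. Q f (x,y)" using e by blast
    then have "?P (x,y)" using QP by blast
    then show "\<bar>h x - h y\<bar> < \<epsilon>" by simp
  qed
  then show ?thesis using F dpos by blast
qed

lemma L2:
  assumes "g \<in> G" shows "ucont_wrt (unif_gen G) g"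
  unfolding ucont_wrt_def
proof (intro allI impI)
  fix e :: real assume "e > 0"
  have "unif_gen G \<le> principal {p. \<bar>g (fst p) - g (snd p)\<bar> < e}"
    unfolding unif_gen_def using assms \<open>e>0\<close>
    by (meson INF_lower2 greaterThan_iff order_refl)
  then show "eventually (\<lambda>p. \<bar>g (fst p) - g (snd p)\<bar> < e) (unif_gen G)"
    by (rule filter_leD) (simp add: eventually_principal)
qed

lemma L3:
  assumes "\<And>n. ucont_wrt U (f n)" "uniform_limit UNIV f g sequentially"
  shows "ucont_wrt U g"
  unfolding ucont_wrt_def
proof (intro allI impI)
  fix e :: real assume "e > 0"
  have e3: "e/3 > 0" using \<open>e > 0\<close> by simp
  have "eventually (\<lambda>n. \<forall>x\<in>UNIV. dist (f n x) (g x) < e/3) sequentially"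
    using assms(2) e3 unfolding uniform_limit_iff by blast
  then obtain N where N: "\<forall>n\<ge>N. \<forall>x\<in>UNIV. dist (f n x) (g x) < e/3"
    unfolding eventually_sequentially by blast
  define n where "n = N"
  have n: "\<forall>x. \<bar>f n x - g x\<bar> < e/3" using N unfolding n_def by (simp add: dist_real_def)
  have "eventually (\<lambda>p. \<bar>f n (fst p) - f n (snd p)\<bar> < e/3) U"
    using assms(1)[of n] e3 unfolding ucont_wrt_def by blast
  then show "eventually (\<lambda>p. \<bar>g (fst p) - g (snd p)\<bar> < e) U"
  proof (rule eventually_mono)
    fix p assume "\<bar>f n (fst p) - f n (snd p)\<bar> < e/3"
    with n[rule_format, of "fst p"] n[rule_format, of "snd p"]
    show "\<bar>g (fst p) - g (snd p)\<bar> < e" by linarith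
  qed
qed

locale cl =
  fixes S :: "('x \<Rightarrow> real) set"
  assumes S_min: "\<And>k1 k2. k1 \<in> S \<Longrightarrow> k2 \<in> S \<Longrightarrow> (\<lambda>x. min (k1 x) (k2 x)) \<in> S"
    and S_add: "\<And>r k. k \<in> S \<Longrightarrow> (\<lambda>x. r + k x) \<in> S"
    and S_mult: "\<And>r k. k \<in> S \<Longrightarrow> (\<lambda>x. r * k x) \<in> S"
begin

lemma S_max: assumes "f \<in> S" "g \<in> S" shows "(\<lambda>x. max (f x) (g x)) \<in> S"
proof -
  have "(\<lambda>x. (-1) * min ((-1) * f x) ((-1) * g x)) \<in> S"
    using assms by (intro S_mult S_min) auto
  moreover have "(\<lambda>x. (-1) * min ((-1) * f x) ((-1) * g x)) = (\<lambda>x. max (f x) (g x))"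
    by (auto simp: fun_eq_iff min_def max_def)
  ultimately show ?thesis by simp
qed

lemma S_absdiff: assumes "k \<in> S" shows "(\<lambda>x. \<bar>k x - c\<bar>) \<in> S"
proof -
  have "(\<lambda>x. max ((-c) + k x) (c + (-1) * ((k x)))) \<in> S"
    using assms by (intro S_max S_add S_mult)
  moreover have "(\<lambda>x. max ((-c) + k x) (c + (-1) * ((k x)))) = (\<lambda>x. \<bar>k x - c\<bar>)"
    by (auto simp: fun_eq_iff max_def)
  ultimately show ?thesis by simp
qed

lemma S_Max: "finite F \<Longrightarrow> F \<noteq> {} \<Longrightarrow> F \<subseteq> S \<Longrightarrow> (\<lambda>x. Max ((\<lambda>k. \<bar>k x - c k\<bar>) ` F)) \<in> S"
proof (induction F rule: finite_ne_induct)
  case (singleton k) then show ?case using S_absdiff by simp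
next
  case (insert k F)
  have "(\<lambda>x. max (\<bar>k x - c k\<bar>) (Max ((\<lambda>k. \<bar>k x - c k\<bar>) ` F))) \<in> S"
    using insert by (intro S_max S_absdiff) auto
  then show ?case using insert by simp
qed

lemma S_Min: "finite P \<Longrightarrow> P \<noteq> {} \<Longrightarrow> (\<And>p. p \<in> P \<Longrightarrow> G p \<in> S) \<Longrightarrow> (\<lambda>x. Min ((\<lambda>p. G p x) ` P)) \<in> S"
proof (induction P rule: finite_ne_induct)
  case (singleton p) then show ?case by simp
next
  case (insert p P)
  have "(\<lambda>x. min (G p x) (Min ((\<lambda>p. G p x) ` P))) \<in> S"
    using insert by (intro S_min) auto
  then show ?case using insert by simp
qed

end

lemma net:
  fixes F :: "('x \<Rightarrow> real) set"
  assumes "finite F" "\<And>k. k \<in> F \<Longrightarrow> bounded (range k)" "\<eta> > 0"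
  shows "\<exists>P. finite P \<and> (\<forall>x. \<exists>p\<in>P. \<forall>k\<in>F. \<bar>k x - k p\<bar> < \<eta>)"
proof -
  define c where "c x = restrict (\<lambda>k. floor (k x / \<eta>)) F" for x
  have fin: "finite ((\<lambda>x. floor (k x / \<eta>)) ` UNIV)" if kF: "k \<in> F" for k
  proof -
    obtain B where B: "\<forall>x. \<bar>k x\<bar> \<le> B" using assms(2)[OF kF] unfolding bounded_iff by auto
    have "(\<lambda>x. floor (k x / \<eta>)) ` UNIV \<subseteq> {floor (-B/\<eta>) .. floor (B/\<eta>)}"
    proof
      fix z assume "z \<in> (\<lambda>x. floor (k x / \<eta>)) ` UNIV"
      then obtain x where z: "z = floor (k x / \<eta>)" by auto
      have b1: "-B \<le> k x" and b2: "k x \<le> B" using B[rule_format, of x] by auto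
      have "-B/\<eta> \<le> k x / \<eta>"
        using divide_right_mono[OF b1, of \<eta>] assms(3) by simp
      moreover have "k x / \<eta> \<le> B/\<eta>"
        using divide_right_mono[OF b2, of \<eta>] assms(3) by simp
      ultimately
      show "z \<in> {floor (-B/\<eta>) .. floor (B/\<eta>)}" unfolding z by (auto intro: floor_mono)
    qed
    then show ?thesis by (rule finite_subset) simp
  qed
  have "c ` UNIV \<subseteq> PiE F (\<lambda>k. (\<lambda>x. floor (k x / \<eta>)) ` UNIV)"
    unfolding c_def by auto
  then have finc: "finite (c ` UNIV)"
    by (rule finite_subset) (intro finite_PiE assms(1) fin)
  define P where "P = (\<lambda>z. SOME x. c x = z) ` (c ` UNIV)"
  have "\<forall>x. \<exists>p\<in>P. \<forall>k\<in>F. \<bar>k x - k p\<bar> < \<eta>"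
  proof
    fix x
    define p where "p = (SOME y. c y = c x)"
    have pP: "p \<in> P" unfolding P_def p_def by auto
    have "c p = c x" unfolding p_def by (rule someI_ex) auto
    have "\<bar>k x - k p\<bar> < \<eta>" if kF: "k \<in> F" for k
    proof -
      have "c p k = c x k" using \<open>c p = c x\<close> by simp
      then have eq: "floor (k x / \<eta>) = floor (k p / \<eta>)"
        using kF unfolding c_def by simp
      have f1: "k x / \<eta> - 1 < real_of_int (floor (k x / \<eta>))" "real_of_int (floor (k x / \<eta>)) \<le> k x / \<eta>"
        by (rule real_of_int_floor_gt_diff_one, rule of_int_floor_le)
      have f2: "k p / \<eta> - 1 < real_of_int (floor (k p / \<eta>))" "real_of_int (floor (k p / \<eta>)) \<le> k p / \<eta>"
        by (rule real_of_int_floor_gt_diff_one, rule of_int_floor_le)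
      have "\<bar>k x / \<eta> - k p / \<eta>\<bar> < 1"
        using f1 f2 eq by linarith
      then have "\<bar>(k x - k p) / \<eta>\<bar> < 1" by (simp add: diff_divide_distrib)
      then show ?thesis using assms(3) by (simp add: abs_divide)
    qed
    then show "\<exists>p\<in>P. \<forall>k\<in>F. \<bar>k x - k p\<bar> < \<eta>" using pP by blast
  qed
  moreover have "finite P" unfolding P_def using finc by simp
  ultimately show ?thesis by blast
qed

lemma approx:
  fixes S :: "('x \<Rightarrow> real) set"
  assumes "cl S" and S_bdd: "\<And>k. k \<in> S \<Longrightarrow> bounded (range k)" and S_one: "(\<lambda>_. 1) \<in> S"
    and hu: "ucont_wrt (unif_gen S) h" and eps: "\<epsilon> > 0"
  shows "\<exists>g\<in>S. \<forall>x. \<bar>g x - h x\<bar> \<le> \<epsilon>"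
proof -
  interpret cl S by fact
  define e where "e = \<epsilon>/3"
  have e: "e > 0" using eps e_def by simp
  obtain F0 \<delta> where F0: "F0 \<subseteq> S" "finite F0" and d: "\<delta> > 0"
    and Fd0: "\<forall>x y. (\<forall>k\<in>F0. \<bar>k x - k y\<bar> < \<delta>) \<longrightarrow> \<bar>h x - h y\<bar> < e"
    using L1[OF hu e] by blast
  define F where "F = insert (\<lambda>_. 1) F0"
  have F: "F \<subseteq> S" "finite F" "F \<noteq> {}" using F0 S_one F_def by auto
  have Fd: "\<And>x y. (\<forall>k\<in>F. \<bar>k x - k y\<bar> < \<delta>) \<Longrightarrow> \<bar>h x - h y\<bar> < e"
    using Fd0 F_def by auto
  have Fb: "\<And>k. k \<in> F \<Longrightarrow> bounded (range k)" using F S_bdd by auto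
  obtain P0 where P0: "finite P0" "\<forall>x. \<exists>p\<in>P0. \<forall>k\<in>F. \<bar>k x - k p\<bar> < \<delta>"
    using net[OF F(2) Fb d] by blast
  define B where "B = Max (insert 0 ((\<lambda>p. \<bar>h p\<bar>) ` P0)) + e"
  have hB: "\<bar>h x\<bar> \<le> B" for x
  proof -
    obtain p where p: "p \<in> P0" "\<forall>k\<in>F. \<bar>k x - k p\<bar> < \<delta>" using P0 by blast
    have "\<bar>h x - h p\<bar> < e" using Fd p(2) by blast
    moreover have "\<bar>h p\<bar> \<le> Max (insert 0 ((\<lambda>p. \<bar>h p\<bar>) ` P0))" using p(1) P0(1) by simp
    ultimately show ?thesis unfolding B_def by linarith
  qed
  have B0: "B \<ge> 0" using hB[of undefined] by simp
  define M where "M = 2 * B / \<delta>"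
  have M0: "M \<ge> 0" unfolding M_def using B0 d by simp
  have Md: "M * \<delta> = 2 * B" unfolding M_def using d by simp
  define \<eta> where "\<eta> = min \<delta> (e / (M + 1))"
  have eta: "\<eta> > 0" unfolding \<eta>_def using d e M0 by simp
  obtain P where P: "finite P" "\<forall>x. \<exists>p\<in>P. \<forall>k\<in>F. \<bar>k x - k p\<bar> < \<eta>"
    using net[OF F(2) Fb eta] by blast
  have Pne: "P \<noteq> {}" using P(2) by blast
  define \<phi> where "\<phi> p x = Max ((\<lambda>k. \<bar>k x - k p\<bar>) ` F)" for p x
  define G where "G p x = (h p + e) + M * \<phi> p x" for p x
  have GS: "G p \<in> S" for p
  proof -
    have "(\<lambda>x. \<phi> p x) \<in> S" unfolding \<phi>_def using S_Max[OF F(2) F(3) F(1), of "\<lambda>k. k p"] by simp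
    then show ?thesis unfolding G_def by (intro S_add S_mult)
  qed
  define g where "g x = Min ((\<lambda>p. G p x) ` P)" for x
  have gS: "g \<in> S" unfolding g_def[abs_def] using S_Min[OF P(1) Pne GS] by simp
  have phi0: "\<phi> p x \<ge> 0" for p x
  proof -
    obtain k0 where k0: "k0 \<in> F" using F(3) by blast
    then have "\<bar>k0 x - k0 p\<bar> \<le> \<phi> p x" unfolding \<phi>_def using F(2) by (intro Max_ge) auto
    then show ?thesis by linarith
  qed
  have phi_lt: "\<phi> p x < t \<longleftrightarrow> (\<forall>k\<in>F. \<bar>k x - k p\<bar> < t)" for p x t
    unfolding \<phi>_def using F by (simp add: Max_less_iff)
  have lower: "h x \<le> G p x" for p x
  proof (cases "\<phi> p x < \<delta>")
    case True
    then have "\<bar>h x - h p\<bar> < e" using Fd phi_lt by blast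
    moreover have "M * \<phi> p x \<ge> 0" using M0 phi0 by (rule mult_nonneg_nonneg)
    ultimately show ?thesis unfolding G_def by linarith
  next
    case False
    then have "M * \<phi> p x \<ge> M * \<delta>" using M0 False by (intro mult_left_mono) auto
    then have "M * \<phi> p x \<ge> 2 * B" using Md by simp
    moreover have "\<bar>h x\<bar> \<le> B" "\<bar>h p\<bar> \<le> B" using hB by auto
    ultimately show ?thesis unfolding G_def using e by linarith
  qed
  have "\<bar>g x - h x\<bar> \<le> \<epsilon>" for x
  proof -
    have "h x \<le> g x" unfolding g_def using P(1) Pne lower by simp
    obtain p where p: "p \<in> P" "\<forall>k\<in>F. \<bar>k x - k p\<bar> < \<eta>" using P by blast
    have "\<phi> p x < \<eta>" using p phi_lt by blast
    then have "\<phi> p x < \<delta>" "\<phi> p x < e / (M+1)" unfolding \<eta>_def by auto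
    then have hp: "\<bar>h x - h p\<bar> < e" using Fd phi_lt by blast
    have "M * \<phi> p x \<le> M * (e / (M+1))" 
      by (rule mult_left_mono) (use \<open>\<phi> p x < e / (M+1)\<close> M0 in auto)
    also have "\<dots> \<le> (M+1) * (e / (M+1))" using e M0 by (intro mult_right_mono) auto
    also have "\<dots> = e" using M0 by simp
    finally have "M * \<phi> p x \<le> e" .
    then have "G p x \<le> h x + 3 * e" unfolding G_def using hp by linarith
    moreover have "g x \<le> G p x" unfolding g_def using P(1) p(1) by simp
    ultimately show ?thesis using \<open>h x \<le> g x\<close> e_def by linarith
  qed
  then show ?thesis using gS by blast
qed

theorem mainTheorem12:
  fixes BXX :: "('x \<Rightarrow> 'x) \<Rightarrow> 'bx \<Rightarrow> 'bx"
    and BXR :: "('x \<Rightarrow> real) \<Rightarrow> 'bx \<Rightarrow> 'br"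
    and BRX :: "(real \<Rightarrow> 'x) \<Rightarrow> 'br \<Rightarrow> 'bx"
    and BRR :: "(real \<Rightarrow> real) \<Rightarrow> 'br \<Rightarrow> 'br"
    and \<Lambda> :: "'l set"
    and \<tau> :: "'l \<Rightarrow> 'br \<Rightarrow> real"
    and S :: "('x \<Rightarrow> real) set"
  assumes B_functor: "set_functor2 BXX BXR BRX BRR"
    and bdd_X: "\<And>k l. bounded (range k) \<Longrightarrow> l \<in> \<Lambda> \<Longrightarrow> bounded (range (\<tau> l \<circ> BXR k))"
    and bdd_R: "\<And>k l. bounded (range k) \<Longrightarrow> l \<in> \<Lambda> \<Longrightarrow> bounded (range (\<tau> l \<circ> BRR k))"
    and ulim_X: "\<And>(k :: nat \<Rightarrow> 'x \<Rightarrow> real) h l. uniform_limit UNIV k h sequentially \<Longrightarrow> l \<in> \<Lambda> \<Longrightarrow>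
                   uniform_limit UNIV (\<lambda>i. \<tau> l \<circ> BXR (k i)) (\<tau> l \<circ> BXR h) sequentially"
    and ulim_R: "\<And>(k :: nat \<Rightarrow> real \<Rightarrow> real) h l. uniform_limit UNIV k h sequentially \<Longrightarrow> l \<in> \<Lambda> \<Longrightarrow>
                   uniform_limit UNIV (\<lambda>i. \<tau> l \<circ> BRR (k i)) (\<tau> l \<circ> BRR h) sequentially"
    and S_bdd: "\<And>k. k \<in> S \<Longrightarrow> bounded (range k)"
    and S_one: "(\<lambda>_. 1) \<in> S"
    and S_min: "\<And>k1 k2. k1 \<in> S \<Longrightarrow> k2 \<in> S \<Longrightarrow> (\<lambda>x. min (k1 x) (k2 x)) \<in> S"
    and S_add: "\<And>r k. k \<in> S \<Longrightarrow> (\<lambda>x. r + k x) \<in> S"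
    and S_mult: "\<And>r k. k \<in> S \<Longrightarrow> (\<lambda>x. r * k x) \<in> S"
  shows "\<forall>h. ucont_wrt (unif_gen S) h \<longrightarrow>
           (\<forall>l\<in>\<Lambda>. ucont_wrt (unif_gen {\<tau> l' \<circ> BXR k | k l'. k \<in> S \<and> l' \<in> \<Lambda>}) (\<tau> l \<circ> BXR h))"
proof (intro allI impI ballI)
  fix h l assume hu: "ucont_wrt (unif_gen S) h" and l: "l \<in> \<Lambda>"
  have clS: "cl S" by (unfold_locales; fact S_min S_add S_mult)
  have "\<forall>n::nat. \<exists>g. g \<in> S \<and> (\<forall>x. \<bar>g x - h x\<bar> \<le> 1 / (real n + 1))"
  proof
    fix n :: nat
    have "(0::real) < 1 / (real n + 1)" by simp
    from approx[OF clS S_bdd S_one hu this] show "\<exists>g. g \<in> S \<and> (\<forall>x. \<bar>g x - h x\<bar> \<le> 1 / (real n + 1))"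
      by blast
  qed
  from choice[OF this] obtain k where kk: "\<forall>n. k n \<in> S \<and> (\<forall>x. \<bar>k n x - h x\<bar> \<le> 1 / (real n + 1))"
    by blast
  have k: "\<And>n. k n \<in> S" "\<And>n x. \<bar>k n x - h x\<bar> \<le> 1 / (real n + 1)"
    using kk by blast+
  have ul: "uniform_limit UNIV k h sequentially"
    unfolding uniform_limit_iff
  proof (intro allI impI)
    fix e :: real assume "e > 0"
    then obtain N :: nat where N0: "inverse (real (Suc N)) < e"
      using reals_Archimedean[OF \<open>e > 0\<close>] by blast
    have N: "1 / (real N + 1) < e" using N0 by (simp add: inverse_eq_divide add.commute)
    show "\<forall>\<^sub>F n in sequentially. \<forall>x\<in>UNIV. dist (k n x) (h x) < e"
      unfolding eventually_sequentially
    proof (intro exI allI impI ballI)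
      fix n x assume "N \<le> n"
      then have "1 / (real n + 1) \<le> 1 / (real N + 1)" by (intro divide_left_mono) auto
      then show "dist (k n x) (h x) < e" using k(2)[of n x] N by (simp add: dist_real_def)
    qed
  qed
  show "ucont_wrt (unif_gen {\<tau> l' \<circ> BXR k | k l'. k \<in> S \<and> l' \<in> \<Lambda>}) (\<tau> l \<circ> BXR h)"
  proof (rule L3[OF _ ulim_X[OF ul l]])
    fix n show "ucont_wrt (unif_gen {\<tau> l' \<circ> BXR k | k l'. k \<in> S \<and> l' \<in> \<Lambda>}) (\<tau> l \<circ> BXR (k n))"
      by (rule L2) (use k(1) l in blast)
  qed
qed

end
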